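(* Let $a_1,\dots,a_N$ be pairwise distinct nonzero complex numbers. The eigenvalues of $\mathbf{S}_a$ are $a_1,\dots,a_N$. Define $N\times N$ matrices $\mathbf{D}_a=(d_{i,j})$ and $\mathbf{E}_a=(e_{i,j})$ by, for $i\ge j$, $$d_{i,j}=\frac{a_i}{a_N}\prod_{k=i+1}^{N}\Big(1-\frac{a_k}{a_j}\Big),\qquad e_{i,j}=\frac{a_N}{a_i}\prod_{\substack{k=j\\k\ne i}}^{N}\frac{1}{1-\frac{a_k}{a_i}},$$ and $d_{i,j}=e_{i,j}=0$ for $i<j$. Then for each $j$, the column $(d_{1,j},\dots,d_{N,j})^T$ is an eigenvector of $\mathbf{S}_a$ with eigenvalue $a_j$; moreover $\mathbf{D}_a^{-1}=\mathbf{E}_a$, so that $$\mathbf{S}_a=\mathbf{D}_a\,\mathrm{diag}(a_1,\dots,a_N)\,\mathbf{E}_a,\quad\text{and hence}\quad \mathbf{S}_a^k=\mathbf{D}_a\,\mathrm{diag}(a_1^k,\dots,a_N^k)\,\mathbf{E}_a\ \text{ for all integers }k\ge 1.$$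
   Context: For a sequence $a=(a_1,\dots,a_N)$ of complex numbers, $\mathbf{S}_a$ denotes the $N\times N$ matrix with $(\mathbf{S}_a)_{i,j}=a_i$ if $i\ge j$ and $0$ otherwise. $\mathrm{diag}(x_1,\dots,x_N)$ is the diagonal matrix with diagonal entries $x_1,\dots,x_N$. *)

theory Defs
  imports "Jordan_Normal_Form.Char_Poly"
begin

text \<open>Convention: the sequence a is indexed 1..N (a i for 1 \<le> i \<le> N), as in the paper.
  Matrices of Jordan_Normal_Form are 0-indexed, so entry (i,j) of a matrix (0-based)
  is the paper's entry (i+1,j+1).\<close>

definition S_mat :: "nat \<Rightarrow> (nat \<Rightarrow> complex) \<Rightarrow> complex mat" where
  "S_mat N a = mat N N (\<lambda>(i,j). if i \<ge> j then a (i+1) else 0)"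

definition d_entry :: "nat \<Rightarrow> (nat \<Rightarrow> complex) \<Rightarrow> nat \<Rightarrow> nat \<Rightarrow> complex" where
  "d_entry N a i j = (if i \<ge> j then a i / a N * (\<Prod>k\<in>{i+1..N}. 1 - a k / a j) else 0)"

definition e_entry :: "nat \<Rightarrow> (nat \<Rightarrow> complex) \<Rightarrow> nat \<Rightarrow> nat \<Rightarrow> complex" where
  "e_entry N a i j = (if i \<ge> j then a N / a i * (\<Prod>k\<in>{j..N} - {i}. 1 / (1 - a k / a i)) else 0)"

definition D_mat :: "nat \<Rightarrow> (nat \<Rightarrow> complex) \<Rightarrow> complex mat" where
  "D_mat N a = mat N N (\<lambda>(i,j). d_entry N a (i+1) (j+1))"

definition E_mat :: "nat \<Rightarrow> (nat \<Rightarrow> complex) \<Rightarrow> complex mat" where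
  "E_mat N a = mat N N (\<lambda>(i,j). e_entry N a (i+1) (j+1))"

end

theory Submission
  imports Defs
begin

lemma sumD:
  assumes nz: "\<forall>i\<in>{1..N}. a i \<noteq> (0::complex)" and iN: "i < N"
  shows "(\<Sum>m\<in>{..i}. d_entry N a (m+1) (j+1)) =
     (if j \<le> i then a (j+1) / a N * (\<Prod>k\<in>{i+2..N}. 1 - a k / a (j+1)) else 0)"
  using iN
proof (induction i)
  case 0
  then show ?case by (auto simp: d_entry_def)
next
  case (Suc i)
  have IH: "(\<Sum>m\<in>{..i}. d_entry N a (m+1) (j+1)) =
     (if j \<le> i then a (j+1) / a N * (\<Prod>k\<in>{i+2..N}. 1 - a k / a (j+1)) else 0)"
    using Suc by simp
  have split: "{i+2..N} = insert (i+2) {i+3..N}" using Suc.prems by auto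
  define Q where "Q = (\<Prod>k\<in>{i+3..N}. 1 - a k / a (j+1))"
  have P: "(\<Prod>k\<in>{i+2..N}. 1 - a k / a (j+1)) = (1 - a (i+2) / a (j+1)) * Q"
    unfolding split Q_def by (subst prod.insert) auto
  have aj: "j \<le> Suc i \<Longrightarrow> a (j+1) \<noteq> 0" using nz Suc.prems by auto
  have s: "(\<Sum>m\<in>{..Suc i}. d_entry N a (m+1) (j+1)) = (\<Sum>m\<in>{..i}. d_entry N a (m+1) (j+1)) + d_entry N a (i+2) (j+1)"
    by simp
  show ?case
  proof (cases "j \<le> i")
    case True
    have d: "d_entry N a (i+2) (j+1) = a (i+2) / a N * Q" using True unfolding d_entry_def Q_def
      by (simp add: numeral_eq_Suc)
    have "a (j+1) / a N * ((1 - a (i+2) / a (j+1)) * Q) + a (i+2) / a N * Q = a (j+1) / a N * Q"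
      using aj True nz Suc.prems by (simp add: field_simps)
    then show ?thesis using True s IH P d unfolding Q_def by (simp add: numeral_eq_Suc)
  next
    case False
    then show ?thesis using IH
      by (cases "j = Suc i") (auto simp: d_entry_def numeral_eq_Suc)
  qed
qed

lemma sumE_aux:
  assumes nz: "\<forall>i\<in>{1..N}. a i \<noteq> (0::complex)" and inj: "inj_on a {1..N}" and iN: "i < N"
  shows "t \<le> N \<Longrightarrow> (\<Sum>m\<in>{N-t..<N}. e_entry N a (i+1) (m+1) * a (m+1)) = a (i+1) * e_entry N a (i+1) (N-t+1)"
proof (induction t)
  case 0
  then show ?case using iN by (simp add: e_entry_def)
next
  case (Suc t)
  define j where "j = N - Suc t"
  have jN: "j < N" and j1: "N - t = j + 1" using Suc.prems unfolding j_def by auto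
  have IH: "(\<Sum>m\<in>{j+1..<N}. e_entry N a (i+1) (m+1) * a (m+1)) = a (i+1) * e_entry N a (i+1) (j+2)"
    using Suc j1 by simp
  have s: "(\<Sum>m\<in>{j..<N}. e_entry N a (i+1) (m+1) * a (m+1)) = e_entry N a (i+1) (j+1) * a (j+1) + (\<Sum>m\<in>{j+1..<N}. e_entry N a (i+1) (m+1) * a (m+1))"
    using jN by (subst sum.atLeast_Suc_lessThan) auto
  have goal: "(\<Sum>m\<in>{j..<N}. e_entry N a (i+1) (m+1) * a (m+1)) = a (i+1) * e_entry N a (i+1) (j+1)"
  proof (cases "j < i")
    case True
    define Q where "Q = (\<Prod>k\<in>{j+2..N} - {i+1}. 1 / (1 - a k / a (i+1)))"
    define c where "c = 1 - a (j+1) / a (i+1)"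
    have ai: "a (i+1) \<noteq> 0" and aN: "a N \<noteq> 0" using nz iN by auto
    have "a (j+1) \<noteq> a (i+1)" using inj True iN jN by (auto dest: inj_onD)
    hence c0: "c \<noteq> 0" unfolding c_def using ai by (auto simp: field_simps)
    have split: "{j+1..N} - {i+1} = insert (j+1) ({j+2..N} - {i+1})" using True jN by auto
    have e1: "e_entry N a (i+1) (j+1) = a N / a (i+1) * (1 / c * Q)"
      using True unfolding e_entry_def Q_def c_def split by (subst prod.insert) auto
    have e2: "e_entry N a (i+1) (j+2) = a N / a (i+1) * Q"
      using True unfolding e_entry_def Q_def by (simp add: numeral_eq_Suc)
    have "a N / a (i+1) * (1 / c * Q) * a (j+1) + a (i+1) * (a N / a (i+1) * Q) = a (i+1) * (a N / a (i+1) * (1 / c * Q))"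
      using ai c0 unfolding c_def by (simp add: field_simps)
    then show ?thesis using s IH e1 e2 by simp
  next
    case False
    show ?thesis
    proof (cases "j = i")
      case True
      then show ?thesis using s IH by (simp add: e_entry_def numeral_eq_Suc)
    next
      case False
      then show ?thesis using s IH \<open>\<not> j < i\<close> by (simp add: e_entry_def numeral_eq_Suc)
    qed
  qed
  then show ?case using j1 j_def by simp
qed

lemma SD:
  assumes nz: "\<forall>i\<in>{1..N}. a i \<noteq> (0::complex)"
  shows "S_mat N a * D_mat N a = D_mat N a * mat_diag N (\<lambda>i. a (i+1))"
proof (rule eq_matI)
  fix i j assume i: "i < dim_row (D_mat N a * mat_diag N (\<lambda>i. a (i+1)))" and j: "j < dim_col (D_mat N a * mat_diag N (\<lambda>i. a (i+1)))"
  hence iN: "i < N" and jN: "j < N" by (auto simp: D_mat_def mat_diag_def)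
  have "(S_mat N a * D_mat N a) $$ (i,j) = (\<Sum>m\<in>{0..<N}. (if m \<in> {..i} then a (i+1) * d_entry N a (m+1) (j+1) else 0))"
    using iN jN by (auto simp: S_mat_def D_mat_def scalar_prod_def intro!: sum.cong)
  also have "\<dots> = (\<Sum>m\<in>{0..<N} \<inter> {..i}. a (i+1) * d_entry N a (m+1) (j+1))"
    by (subst sum.inter_restrict) auto
  also have "{0..<N} \<inter> {..i} = {..i}" using iN by auto
  also have "(\<Sum>m\<in>{..i}. a (i+1) * d_entry N a (m+1) (j+1)) = a (i+1) * (\<Sum>m\<in>{..i}. d_entry N a (m+1) (j+1))"
    by (simp add: sum_distrib_left)
  also have "\<dots> = d_entry N a (i+1) (j+1) * a (j+1)"
    unfolding sumD[OF nz iN] using nz iN by (auto simp: d_entry_def)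
  also have "\<dots> = (D_mat N a * mat_diag N (\<lambda>i. a (i+1))) $$ (i,j)"
    using iN jN by (subst mat_diag_mult_right[of _ N]) (auto simp: D_mat_def)
  finally show "(S_mat N a * D_mat N a) $$ (i,j) = (D_mat N a * mat_diag N (\<lambda>i. a (i+1))) $$ (i,j)" .
qed (auto simp: S_mat_def D_mat_def mat_diag_def)

lemma ES:
  assumes nz: "\<forall>i\<in>{1..N}. a i \<noteq> (0::complex)" and inj: "inj_on a {1..N}"
  shows "E_mat N a * S_mat N a = mat_diag N (\<lambda>i. a (i+1)) * E_mat N a"
proof (rule eq_matI)
  fix i j assume i: "i < dim_row (mat_diag N (\<lambda>i. a (i+1)) * E_mat N a)" and j: "j < dim_col (mat_diag N (\<lambda>i. a (i+1)) * E_mat N a)"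
  hence iN: "i < N" and jN: "j < N" by (auto simp: E_mat_def mat_diag_def)
  have "(E_mat N a * S_mat N a) $$ (i,j) = (\<Sum>m\<in>{0..<N}. (if m \<in> {j..} then e_entry N a (i+1) (m+1) * a (m+1) else 0))"
    using iN jN by (auto simp: S_mat_def E_mat_def scalar_prod_def intro!: sum.cong)
  also have "\<dots> = (\<Sum>m\<in>{0..<N} \<inter> {j..}. e_entry N a (i+1) (m+1) * a (m+1))"
    by (subst sum.inter_restrict) auto
  also have "{0..<N} \<inter> {j..} = {N - (N-j)..<N}" using jN by auto
  also have "(\<Sum>m\<in>{N - (N-j)..<N}. e_entry N a (i+1) (m+1) * a (m+1)) = a (i+1) * e_entry N a (i+1) (N - (N-j)+1)"
    by (rule sumE_aux[OF nz inj iN]) simp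
  also have "\<dots> = (mat_diag N (\<lambda>i. a (i+1)) * E_mat N a) $$ (i,j)"
    using iN jN by (subst mat_diag_mult_left[of _ N N]) (auto simp: E_mat_def)
  finally show "(E_mat N a * S_mat N a) $$ (i,j) = (mat_diag N (\<lambda>i. a (i+1)) * E_mat N a) $$ (i,j)" .
qed (auto simp: S_mat_def E_mat_def mat_diag_def)

lemma carriers[simp]: "S_mat N a \<in> carrier_mat N N" "D_mat N a \<in> carrier_mat N N" "E_mat N a \<in> carrier_mat N N"
  by (auto simp: S_mat_def D_mat_def E_mat_def)

lemma ED:
  assumes nz: "\<forall>i\<in>{1..N}. a i \<noteq> (0::complex)" and inj: "inj_on a {1..N}"
  shows "E_mat N a * D_mat N a = 1\<^sub>m N"
proof -
  define L where "L = mat_diag N (\<lambda>i. a (i+1))"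
  define X where "X = E_mat N a * D_mat N a"
  have L: "L \<in> carrier_mat N N" unfolding L_def by simp
  have X: "X \<in> carrier_mat N N" unfolding X_def by (rule mult_carrier_mat[of _ N N]) simp_all
  have "L * X = (L * E_mat N a) * D_mat N a" unfolding X_def using L by (simp add: assoc_mult_mat[of _ N N _ N _ N])
  also have "\<dots> = (E_mat N a * S_mat N a) * D_mat N a" unfolding L_def using ES[OF nz inj] by simp
  also have "\<dots> = E_mat N a * (S_mat N a * D_mat N a)" by (simp add: assoc_mult_mat[of _ N N _ N _ N])
  also have "\<dots> = E_mat N a * (D_mat N a * L)" using SD[OF nz] unfolding L_def by simp
  also have "\<dots> = X * L" unfolding X_def using L by (simp add: assoc_mult_mat[of _ N N _ N _ N])
  finally have comm: "L * X = X * L" .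
  show ?thesis unfolding X_def[symmetric]
  proof (rule eq_matI)
    fix i j assume "i < dim_row (1\<^sub>m N :: complex mat)" "j < dim_col (1\<^sub>m N :: complex mat)"
    hence iN: "i < N" and jN: "j < N" by auto
    show "X $$ (i,j) = 1\<^sub>m N $$ (i,j)"
    proof (cases "i = j")
      case False
      have "(L * X) $$ (i,j) = (X * L) $$ (i,j)" using comm by simp
      hence "a (i+1) * X $$ (i,j) = X $$ (i,j) * a (j+1)" unfolding L_def using iN jN X
        by (simp add: mat_diag_mult_left[of _ N N] mat_diag_mult_right[of _ N])
      moreover have "a (i+1) \<noteq> a (j+1)" using inj iN jN False by (auto dest: inj_onD)
      ultimately have "X $$ (i,j) = 0" by (metis mult.commute mult_cancel_left)
      then show ?thesis using iN jN False by simp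
    next
      case True
      have "X $$ (i,i) = (\<Sum>m\<in>{0..<N}. e_entry N a (i+1) (m+1) * d_entry N a (m+1) (i+1))"
        unfolding X_def using iN by (simp add: E_mat_def D_mat_def scalar_prod_def)
      also have "\<dots> = (\<Sum>m\<in>{0..<N}. if m = i then e_entry N a (i+1) (i+1) * d_entry N a (i+1) (i+1) else 0)"
        by (rule sum.cong) (auto simp: e_entry_def d_entry_def)
      also have "\<dots> = e_entry N a (i+1) (i+1) * d_entry N a (i+1) (i+1)" using iN by simp
      also have "\<dots> = (a N / a (i+1) * a (i+1) / a N) * (\<Prod>k\<in>{i+2..N}. 1 / (1 - a k / a (i+1)) * (1 - a k / a (i+1)))"
      proof -
        have "{i+1..N} - {i+1} = {i+2..N}" by auto
        then have "e_entry N a (i+1) (i+1) * d_entry N a (i+1) (i+1) = (a N / a (i+1) * (\<Prod>k\<in>{i+2..N}. 1 / (1 - a k / a (i+1)))) * (a (i+1) / a N * (\<Prod>k\<in>{i+2..N}. 1 - a k / a (i+1)))"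
          unfolding e_entry_def d_entry_def by (simp add: numeral_eq_Suc)
        also have "\<dots> = (a N / a (i+1) * a (i+1) / a N) * ((\<Prod>k\<in>{i+2..N}. 1 / (1 - a k / a (i+1))) * (\<Prod>k\<in>{i+2..N}. 1 - a k / a (i+1)))"
          by (simp only: mult_ac times_divide_eq_right times_divide_eq_left divide_divide_eq_left)
        also have "\<dots> = (a N / a (i+1) * a (i+1) / a N) * (\<Prod>k\<in>{i+2..N}. 1 / (1 - a k / a (i+1)) * (1 - a k / a (i+1)))"
          by (simp only: prod.distrib)
        finally show ?thesis .
      qed
      also have "\<dots> = 1"
      proof -
        have ai: "a (i+1) \<noteq> 0" and aN: "a N \<noteq> 0" using nz iN by auto
        have "\<forall>k\<in>{i+2..N}. 1 / (1 - a k / a (i+1)) * (1 - a k / a (i+1)) = 1"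
        proof
          fix k assume k: "k \<in> {i+2..N}"
          have "a k \<noteq> a (i+1)" using inj k iN by (auto dest: inj_onD)
          hence "1 - a k / a (i+1) \<noteq> 0" using ai by (auto simp: field_simps)
          thus "1 / (1 - a k / a (i+1)) * (1 - a k / a (i+1)) = 1" by simp
        qed
        then show ?thesis using ai aN by simp
      qed
      finally show ?thesis using True iN by simp
    qed
  qed (use X in auto)
qed

theorem proposition2p2:
  fixes N :: nat and a :: "nat \<Rightarrow> complex"
  assumes N: "N \<ge> 1"
    and nonzero: "\<forall>i\<in>{1..N}. a i \<noteq> 0"
    and distinct: "inj_on a {1..N}"
  shows "({c. eigenvalue (S_mat N a) c} = a ` {1..N})
      \<and> (\<forall>j\<in>{1..N}. eigenvector (S_mat N a) (col (D_mat N a) (j - 1)) (a j))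
      \<and> (D_mat N a * E_mat N a = 1\<^sub>m N \<and> E_mat N a * D_mat N a = 1\<^sub>m N)
      \<and> S_mat N a = D_mat N a * mat_diag N (\<lambda>i. a (i+1)) * E_mat N a
      \<and> (\<forall>k::nat. k \<ge> 1 \<longrightarrow>
           S_mat N a ^\<^sub>m k = D_mat N a * mat_diag N (\<lambda>i. a (i+1) ^ k) * E_mat N a)"
proof -
  define S where "S = S_mat N a"
  define D where "D = D_mat N a"
  define E where "E = E_mat N a"
  define L where "L = mat_diag N (\<lambda>i. a (i+1))"
  have S: "S \<in> carrier_mat N N" and D: "D \<in> carrier_mat N N" and E: "E \<in> carrier_mat N N"
    and L: "L \<in> carrier_mat N N" unfolding S_def D_def E_def L_def by auto
  have ED: "E * D = 1\<^sub>m N" unfolding E_def D_def by (rule ED[OF nonzero distinct])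
  have DE: "D * E = 1\<^sub>m N" by (rule mat_mult_left_right_inverse[OF E D ED])
  have SD: "S * D = D * L" unfolding S_def D_def L_def by (rule SD[OF nonzero])
  have Sdec: "S = D * L * E"
  proof -
    have "S = S * (D * E)" using S DE by simp
    also have "\<dots> = (S * D) * E" using S D E by (simp add: assoc_mult_mat[of _ N N _ N _ N])
    finally show ?thesis using SD by simp
  qed
  have pow: "S ^\<^sub>m k = D * mat_diag N (\<lambda>i. a (i+1) ^ k) * E" for k
  proof (induction k)
    case 0
    then show ?case using DE D S by simp
  next
    case (Suc k)
    define Lk where "Lk = mat_diag N (\<lambda>i. a (i+1) ^ k)"
    have Lk: "Lk \<in> carrier_mat N N" unfolding Lk_def by simp
    have "S ^\<^sub>m Suc k = (D * Lk * E) * (D * L * E)" using Suc Sdec unfolding Lk_def by simp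
    also have "\<dots> = D * Lk * (E * D) * L * E"
      using D E L Lk by (simp add: assoc_mult_mat[of _ N N _ N _ N])
    also have "\<dots> = D * (Lk * L) * E" using ED D Lk L by (simp add: assoc_mult_mat[of _ N N _ N _ N])
    also have "Lk * L = mat_diag N (\<lambda>i. a (i+1) ^ Suc k)" unfolding Lk_def L_def by (simp add: mult.commute)
    finally show ?case .
  qed
  have dnz: "D $$ (j, j) \<noteq> 0" if jN: "j < N" for j
  proof -
    have aj: "a (j+1) \<noteq> 0" using nonzero jN by auto
    have "\<forall>k\<in>{j+2..N}. 1 - a k / a (j+1) \<noteq> 0"
    proof
      fix k assume k: "k \<in> {j+2..N}"
      have "a k \<noteq> a (j+1)" using distinct k jN by (auto dest: inj_onD)
      thus "1 - a k / a (j+1) \<noteq> 0" using aj by (auto simp: field_simps)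
    qed
    then show ?thesis using jN aj nonzero unfolding D_def D_mat_def d_entry_def by (auto simp: numeral_eq_Suc)
  qed
  have ev: "eigenvector S (col D j) (a (j+1))" if jN: "j < N" for j
    unfolding eigenvector_def
  proof (intro conjI)
    show "col D j \<in> carrier_vec (dim_row S)" using S D by auto
    show "col D j \<noteq> 0\<^sub>v (dim_row S)"
    proof
      assume "col D j = 0\<^sub>v (dim_row S)"
      hence "col D j $ j = 0" using S jN by simp
      thus False using dnz[OF jN] D jN by simp
    qed
    have "S *\<^sub>v col D j = col (S * D) j" using S D jN by (rule col_mult2[symmetric])
    also have "\<dots> = col (D * L) j" using SD by simp
    also have "\<dots> = a (j+1) \<cdot>\<^sub>v col D j"
      using D jN unfolding L_def by (subst mat_diag_mult_right[of _ N]) (auto intro!: eq_vecI)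
    finally show "S *\<^sub>v col D j = a (j+1) \<cdot>\<^sub>v col D j" .
  qed
  have evs: "{c. eigenvalue S c} = a ` {1..N}"
  proof
    show "a ` {1..N} \<subseteq> {c. eigenvalue S c}"
    proof
      fix c assume "c \<in> a ` {1..N}"
      then obtain j where j: "j < N" "c = a (j+1)" by (auto simp: image_iff) (metis Suc_le_D Suc_le_lessD less_Suc_eq_le)
      then show "c \<in> {c. eigenvalue S c}" using ev[OF j(1)] unfolding eigenvalue_def by auto
    qed
    show "{c. eigenvalue S c} \<subseteq> a ` {1..N}"
    proof
      fix c assume "c \<in> {c. eigenvalue S c}"
      then obtain v where v: "v \<in> carrier_vec N" "v \<noteq> 0\<^sub>v N" "S *\<^sub>v v = c \<cdot>\<^sub>v v"
        unfolding eigenvalue_def eigenvector_def using S by auto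
      define w where "w = E *\<^sub>v v"
      have w: "w \<in> carrier_vec N" unfolding w_def using E v by simp
      have "D *\<^sub>v w = v" unfolding w_def using D E v DE by (simp flip: assoc_mult_mat_vec)
      hence wnz: "w \<noteq> 0\<^sub>v N" using v D by auto
      have "L *\<^sub>v w = E *\<^sub>v (S *\<^sub>v v)"
      proof -
        have "E *\<^sub>v (S *\<^sub>v v) = (E * S) *\<^sub>v v" using E S v by simp
        also have "E * S = L * E"
        proof -
          have "E * S = (E * D) * L * E" using Sdec E D L by (simp add: assoc_mult_mat[of _ N N _ N _ N])
          thus ?thesis using ED L by simp
        qed
        also have "(L * E) *\<^sub>v v = L *\<^sub>v w" unfolding w_def using L E v by simp
        finally show ?thesis by simp
      qed
      also have "\<dots> = c \<cdot>\<^sub>v w" unfolding w_def using v E by (simp add: mult_mat_vec)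
      finally have Lw: "L *\<^sub>v w = c \<cdot>\<^sub>v w" .
      obtain i where i: "i < N" "w $ i \<noteq> 0" using wnz w by (metis eq_vecI carrier_vecD index_zero_vec)
      have "(L *\<^sub>v w) $ i = a (i+1) * w $ i"
      proof -
        have "(L *\<^sub>v w) $ i = (\<Sum>m\<in>{0..<N}. (if i = m then a (Suc m) else 0) * w $ m)"
          using i w L unfolding L_def by (simp add: mat_diag_def scalar_prod_def)
        also have "\<dots> = (\<Sum>m\<in>{0..<N}. if m = i then a (i+1) * w $ i else 0)"
          by (rule sum.cong) auto
        finally show ?thesis using i by simp
      qed
      moreover have "(c \<cdot>\<^sub>v w) $ i = c * w $ i" using i w by simp
      ultimately have "c = a (i+1)" using Lw i by simp
      then show "c \<in> a ` {1..N}" using i by auto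
    qed
  qed
  have ev2: "\<forall>j\<in>{1..N}. eigenvector S (col D (j - 1)) (a j)"
  proof
    fix j assume "j \<in> {1..N}"
    then show "eigenvector S (col D (j - 1)) (a j)" using ev[of "j-1"] by auto
  qed
  show ?thesis
    using evs ev2 DE ED Sdec pow unfolding S_def D_def E_def L_def by blast
qed

end
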